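(* Let $\pi(t)\in\mathbb R^m$, $t\ge0$, be vectors with nonnegative entries, $\mathbf 1_m^\top\pi(t)=1$, and $\pi(t)^\top=\pi(t+1)^\top A(t)$ for all $t\ge0$. Let $\theta_i(t)$ be generated by the DPG iteration and set $\bar\theta(t)=\sum_{j=1}^m\pi_j(t)\theta_j(t)$. Then for every $v\in\Omega$ and every $t\ge0$, $$\sum_{i=1}^m\pi_i(t+1)\|\theta_i(t+1)-v\|^2\le\sum_{i=1}^m\pi_i(t)\|\theta_i(t)-v\|^2-2\alpha(t)c^\top(\bar\theta(t)-v)+C^2\alpha^2(t)+2C\alpha(t)\sum_{i=1}^m\pi_i(t)\|\theta_i(t)-\bar\theta(t)\|-\sum_{i=1}^m\pi_i(t+1)\|\phi_i(t)\|^2.$$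
   Context: Agents $\mathcal V=\{1,\dots,m\}$. $A(t)=[a_{ij}(t)]\in\mathbb R^{m\times m}$, $t\in\mathbb Z_{\ge0}$, are row-stochastic matrices with nonnegative entries ($\sum_j a_{ij}(t)=1$). Let $\Omega_1,\dots,\Omega_m\subseteq\mathbb R^p$ be nonempty closed convex sets with $\Omega=\bigcap_i\Omega_i\neq\emptyset$, let $c\in\mathbb R^p$, $C=\|c\|$, and let $\alpha(t)>0$ be stepsizes. $P_K$ is Euclidean projection onto a closed convex set $K$. The DPG iteration, from arbitrary $\theta_i(0)\in\mathbb R^p$, is $\theta_i(t+1)=P_{\Omega_i}\big[\sum_{j=1}^m a_{ij}(t)\theta_j(t)-\alpha(t)c\big]$, and $\phi_i(t)=\theta_i(t+1)-\big[\sum_{j=1}^m a_{ij}(t)\theta_j(t)-\alpha(t)c\big]$. *)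

theory Defs
  imports "HOL-Analysis.Analysis"
begin

end

theory Submission
  imports Defs
begin

lemma proj_ineq:
  fixes S :: "'a::euclidean_space set"
  assumes "closed S" "convex S" "S \<noteq> {}" "v \<in> S"
  shows "(norm (closest_point S z - v))\<^sup>2 \<le> (norm (z - v))\<^sup>2 - (norm (closest_point S z - z))\<^sup>2"
proof -
  let ?p = "closest_point S z"
  have "inner (z - ?p) (v - ?p) \<le> 0"
    by (rule any_closest_point_dot[OF assms(2,1) closest_point_in_set[OF assms(1,3)] assms(4)])
       (use closest_point_exists(2)[OF assms(1,3)] in blast)
  moreover have "(norm (z - v))\<^sup>2 = (norm (z - ?p))\<^sup>2 + (norm (?p - v))\<^sup>2 - 2 * inner (z - ?p) (v - ?p)"
  proof -
    have g: "(norm (a + b))\<^sup>2 = (norm a)\<^sup>2 + (norm b)\<^sup>2 + 2 * inner a b" for a b :: 'a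
      by (simp add: power2_norm_eq_inner inner_add_left inner_add_right inner_commute)
    have "z - v = (z - ?p) + (?p - v)" by simp
    then have "(norm (z - v))\<^sup>2 = (norm ((z - ?p) + (?p - v)))\<^sup>2" by metis
    also have "\<dots> = (norm (z - ?p))\<^sup>2 + (norm (?p - v))\<^sup>2 + 2 * inner (z - ?p) (?p - v)"
      by (rule g)
    also have "inner (z - ?p) (?p - v) = - inner (z - ?p) (v - ?p)"
      by (simp add: inner_diff_right)
    finally show ?thesis by simp
  qed
  moreover have "norm (?p - z) = norm (z - ?p)" by (simp add: norm_minus_commute)
  ultimately show ?thesis by simp
qed

lemma norm_sum_sq:
  fixes x :: "nat \<Rightarrow> 'a::real_normed_vector"
  assumes "finite S" "S \<noteq> {}" "\<And>j. j \<in> S \<Longrightarrow> a j \<ge> 0" "(\<Sum>j\<in>S. a j) = 1"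
  shows "(norm (\<Sum>j\<in>S. a j *\<^sub>R x j))\<^sup>2 \<le> (\<Sum>j\<in>S. a j * (norm (x j))\<^sup>2)"
proof -
  have "norm (\<Sum>j\<in>S. a j *\<^sub>R x j) \<le> (\<Sum>j\<in>S. norm (a j *\<^sub>R x j))"
    by (rule norm_sum)
  also have "\<dots> = (\<Sum>j\<in>S. a j * norm (x j))" using assms(3) by (intro sum.cong) auto
  finally have "(norm (\<Sum>j\<in>S. a j *\<^sub>R x j))\<^sup>2 \<le> (\<Sum>j\<in>S. a j * norm (x j))\<^sup>2"
    by (intro power_mono) auto
  also have "\<dots> = (\<Sum>j\<in>S. a j *\<^sub>R norm (x j))\<^sup>2" by simp
  also have "\<dots> \<le> (\<Sum>j\<in>S. a j * (norm (x j))\<^sup>2)"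
    using convex_on_sum[OF assms(1,2) convex_power2 assms(4) assms(3), of "\<lambda>j. norm (x j)"] by simp
  finally show ?thesis .
qed

theorem proposition6:
  fixes m :: nat
    and A :: "nat \<Rightarrow> nat \<Rightarrow> nat \<Rightarrow> real"
    and Omega :: "nat \<Rightarrow> 'a::euclidean_space set"
    and c :: 'a
    and alpha :: "nat \<Rightarrow> real"
    and theta :: "nat \<Rightarrow> nat \<Rightarrow> 'a"
    and pi :: "nat \<Rightarrow> nat \<Rightarrow> real"
    and v :: 'a and t :: nat
  assumes A_nonneg: "\<And>s i j. i < m \<Longrightarrow> j < m \<Longrightarrow> A s i j \<ge> 0"
    and A_stoch: "\<And>s i. i < m \<Longrightarrow> (\<Sum>j<m. A s i j) = 1"
    and Omega_closed: "\<And>i. i < m \<Longrightarrow> closed (Omega i)"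
    and Omega_convex: "\<And>i. i < m \<Longrightarrow> convex (Omega i)"
    and Omega_ne: "\<And>i. i < m \<Longrightarrow> Omega i \<noteq> {}"
    and Omega_int_ne: "(\<Inter>i\<in>{..<m}. Omega i) \<noteq> {}"
    and alpha_pos: "\<And>s. alpha s > 0"
    and dpg: "\<And>s i. i < m \<Longrightarrow> theta (Suc s) i =
               closest_point (Omega i) ((\<Sum>j<m. A s i j *\<^sub>R theta s j) - alpha s *\<^sub>R c)"
    and pi_nonneg: "\<And>s j. j < m \<Longrightarrow> pi s j \<ge> 0"
    and pi_sum: "\<And>s. (\<Sum>j<m. pi s j) = 1"
    and pi_stat: "\<And>s j. j < m \<Longrightarrow> pi s j = (\<Sum>i<m. pi (Suc s) i * A s i j)"
    and v_in: "v \<in> (\<Inter>i\<in>{..<m}. Omega i)"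
  shows "let C = norm c;
             thetabar = (\<Sum>j<m. pi t j *\<^sub>R theta t j);
             phi = (\<lambda>i. theta (Suc t) i - ((\<Sum>j<m. A t i j *\<^sub>R theta t j) - alpha t *\<^sub>R c))
         in (\<Sum>i<m. pi (Suc t) i * (norm (theta (Suc t) i - v))\<^sup>2)
            \<le> (\<Sum>i<m. pi t i * (norm (theta t i - v))\<^sup>2)
               - 2 * alpha t * (c \<bullet> (thetabar - v))
               + C\<^sup>2 * (alpha t)\<^sup>2
               + 2 * C * alpha t * (\<Sum>i<m. pi t i * norm (theta t i - thetabar))
               - (\<Sum>i<m. pi (Suc t) i * (norm (phi i))\<^sup>2)"
proof -
  define w where "w i = (\<Sum>j<m. A t i j *\<^sub>R theta t j)" for i
  define z where "z i = w i - alpha t *\<^sub>R c" for i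
  define tb where "tb = (\<Sum>j<m. pi t j *\<^sub>R theta t j)"
  define phi where "phi i = theta (Suc t) i - z i" for i
  let ?p = "pi (Suc t)"
  have mpos: "m \<noteq> 0"
  proof
    assume "m = 0" then show False using pi_sum[of t] by simp
  qed
  have step: "?p i * (norm (theta (Suc t) i - v))\<^sup>2 \<le>
      ?p i * (\<Sum>j<m. A t i j * (norm (theta t j - v))\<^sup>2) - 2 * alpha t * (?p i * (c \<bullet> (w i - v)))
      + ?p i * ((norm c)\<^sup>2 * (alpha t)\<^sup>2) - ?p i * (norm (phi i))\<^sup>2" if i: "i < m" for i
  proof -
    have vi: "v \<in> Omega i" using v_in i by auto
    have th: "theta (Suc t) i = closest_point (Omega i) (z i)" using dpg[OF i] by (simp add: z_def w_def)
    have 1: "(norm (theta (Suc t) i - v))\<^sup>2 \<le> (norm (z i - v))\<^sup>2 - (norm (phi i))\<^sup>2"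
      using proj_ineq[OF Omega_closed[OF i] Omega_convex[OF i] Omega_ne[OF i] vi, of "z i"]
      by (simp add: th phi_def)
    have 2: "(norm (z i - v))\<^sup>2 = (norm (w i - v))\<^sup>2 - 2 * alpha t * (c \<bullet> (w i - v)) + (norm c)\<^sup>2 * (alpha t)\<^sup>2"
    proof -
      have g: "(norm (a - r *\<^sub>R d))\<^sup>2 = (norm a)\<^sup>2 - 2 * r * (d \<bullet> a) + (norm d)\<^sup>2 * r\<^sup>2" for a d :: 'a and r
        unfolding power2_norm_eq_inner by (simp add: inner_diff_left inner_diff_right inner_commute power2_eq_square algebra_simps)
      have "z i - v = (w i - v) - alpha t *\<^sub>R c" by (simp add: z_def)
      then show ?thesis using g[of "w i - v" "alpha t" c] by metis
    qed
    have wv: "w i - v = (\<Sum>j<m. A t i j *\<^sub>R (theta t j - v))"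
    proof -
      have "(\<Sum>j<m. A t i j *\<^sub>R (theta t j - v)) = w i - (\<Sum>j<m. A t i j) *\<^sub>R v"
        by (simp add: w_def scaleR_diff_right sum_subtractf scaleR_sum_left)
      then show ?thesis using A_stoch[OF i] by simp
    qed
    have 3: "(norm (w i - v))\<^sup>2 \<le> (\<Sum>j<m. A t i j * (norm (theta t j - v))\<^sup>2)"
      unfolding wv using norm_sum_sq[of "{..<m}" "A t i" "\<lambda>j. theta t j - v"] A_nonneg[OF i] A_stoch[OF i] mpos by auto
    have "(norm (theta (Suc t) i - v))\<^sup>2 \<le> (\<Sum>j<m. A t i j * (norm (theta t j - v))\<^sup>2)
       - 2 * alpha t * (c \<bullet> (w i - v)) + (norm c)\<^sup>2 * (alpha t)\<^sup>2 - (norm (phi i))\<^sup>2"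
      using 1 2 3 by linarith
    from mult_left_mono[OF this pi_nonneg[OF i, of "Suc t"]] show ?thesis
      by (simp add: algebra_simps)
  qed
  have S0: "(\<Sum>i<m. ?p i * (norm (theta (Suc t) i - v))\<^sup>2) \<le> (\<Sum>i<m.
      ?p i * (\<Sum>j<m. A t i j * (norm (theta t j - v))\<^sup>2) - 2 * alpha t * (?p i * (c \<bullet> (w i - v)))
      + ?p i * ((norm c)\<^sup>2 * (alpha t)\<^sup>2) - ?p i * (norm (phi i))\<^sup>2)"
    by (rule sum_mono) (rule step, simp)
  have s1: "(\<Sum>i<m. 2 * alpha t * (?p i * (c \<bullet> (w i - v)))) = 2 * alpha t * (\<Sum>i<m. ?p i * (c \<bullet> (w i - v)))"
    by (rule sum_distrib_left[symmetric])
  have s2: "(\<Sum>i<m. ?p i * ((norm c)\<^sup>2 * (alpha t)\<^sup>2)) = (\<Sum>i<m. ?p i) * ((norm c)\<^sup>2 * (alpha t)\<^sup>2)"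
    by (rule sum_distrib_right[symmetric])
  have S: "(\<Sum>i<m. ?p i * (norm (theta (Suc t) i - v))\<^sup>2) \<le>
      (\<Sum>i<m. ?p i * (\<Sum>j<m. A t i j * (norm (theta t j - v))\<^sup>2)) - 2 * alpha t * (\<Sum>i<m. ?p i * (c \<bullet> (w i - v)))
      + (\<Sum>i<m. ?p i) * ((norm c)\<^sup>2 * (alpha t)\<^sup>2) - (\<Sum>i<m. ?p i * (norm (phi i))\<^sup>2)"
    using S0 unfolding sum_subtractf sum.distrib s1 s2 .
  have E1: "(\<Sum>i<m. ?p i * (\<Sum>j<m. A t i j * (norm (theta t j - v))\<^sup>2)) = (\<Sum>j<m. pi t j * (norm (theta t j - v))\<^sup>2)"
  proof -
    have "(\<Sum>i<m. ?p i * (\<Sum>j<m. A t i j * (norm (theta t j - v))\<^sup>2)) =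
        (\<Sum>i<m. \<Sum>j<m. ?p i * A t i j * (norm (theta t j - v))\<^sup>2)"
      by (simp add: sum_distrib_left mult.assoc)
    also have "\<dots> = (\<Sum>j<m. \<Sum>i<m. ?p i * A t i j * (norm (theta t j - v))\<^sup>2)"
      by (rule sum.swap)
    also have "\<dots> = (\<Sum>j<m. (\<Sum>i<m. ?p i * A t i j) * (norm (theta t j - v))\<^sup>2)"
      by (simp add: sum_distrib_right)
    also have "\<dots> = (\<Sum>j<m. pi t j * (norm (theta t j - v))\<^sup>2)"
      using pi_stat by (intro sum.cong) auto
    finally show ?thesis .
  qed
  have E2: "(\<Sum>i<m. ?p i * (c \<bullet> (w i - v))) = c \<bullet> (tb - v)"
  proof -
    have "(\<Sum>i<m. ?p i * (c \<bullet> (w i - v))) = c \<bullet> (\<Sum>i<m. ?p i *\<^sub>R (w i - v))"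
      by (simp add: inner_sum_right)
    also have "(\<Sum>i<m. ?p i *\<^sub>R (w i - v)) = (\<Sum>i<m. ?p i *\<^sub>R w i) - v"
      using pi_sum[of "Suc t"] by (simp add: scaleR_diff_right sum_subtractf scaleR_sum_left[symmetric])
    also have "(\<Sum>i<m. ?p i *\<^sub>R w i) = (\<Sum>i<m. \<Sum>j<m. (?p i * A t i j) *\<^sub>R theta t j)"
      by (simp add: w_def scaleR_sum_right)
    also have "\<dots> = (\<Sum>j<m. \<Sum>i<m. (?p i * A t i j) *\<^sub>R theta t j)"
      by (rule sum.swap)
    also have "\<dots> = (\<Sum>j<m. (\<Sum>i<m. ?p i * A t i j) *\<^sub>R theta t j)"
      by (simp add: scaleR_sum_left)
    also have "\<dots> = tb" unfolding tb_def using pi_stat by (intro sum.cong) auto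
    finally show ?thesis .
  qed
  have nn: "0 \<le> 2 * norm c * alpha t * (\<Sum>i<m. pi t i * norm (theta t i - tb))"
    using alpha_pos[of t] pi_nonneg by (intro mult_nonneg_nonneg sum_nonneg) (auto simp: less_imp_le)
  have key: "(\<Sum>i<m. ?p i * (norm (theta (Suc t) i - v))\<^sup>2)
            \<le> (\<Sum>i<m. pi t i * (norm (theta t i - v))\<^sup>2)
               - 2 * alpha t * (c \<bullet> (tb - v))
               + (norm c)\<^sup>2 * (alpha t)\<^sup>2
               + 2 * norm c * alpha t * (\<Sum>i<m. pi t i * norm (theta t i - tb))
               - (\<Sum>i<m. ?p i * (norm (phi i))\<^sup>2)"
    using S nn unfolding E1 E2 pi_sum by linarith
  show ?thesis
    using key unfolding Let_def tb_def phi_def z_def w_def .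
qed

end
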